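(* Let $(u,x)$ and $(u,y)$ be Burge words with the same top row $u$. If $x\sim y$, then $\Gamma(u,x)=\Gamma(u,y)$.
   Context: $\mathrm{Cay}_n$ is the set of Cayley permutations of length $n$ (words of positive integers in which every integer from $1$ to the maximum occurs), $\mathrm{WI}_n$ its weakly increasing elements. For $(u,v)\in\mathrm{WI}_n\times\mathrm{Cay}_n$, viewed as a biword with columns $\binom{u(i)}{v(i)}$, the Burge transpose $(u,v)^T$ turns each column $\binom{a}{b}$ into $\binom{b}{a}$ and sorts the columns increasingly by top entry, ties by decreasing bottom entry. With weak descent set $\mathrm{Des}(v)=\{i:v(i)\ge v(i+1)\}$, the Burge words of length $n$ are the pairs $(u,v)\in\mathrm{WI}_n\times\mathrm{Cay}_n$ with $\mathrm{Des}(u)\subseteq\mathrm{Des}(v)$. $\Gamma(u,v)$ denotes the bottom row of $(u,v)^T$. For $x\in\mathrm{Cay}_n$, $\gamma(x)=\Gamma(1\,2\cdots n,\,x)$, and $x\sim y$ iff $\gamma(x)=\gamma(y)$. *)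

theory Defs
  imports Main "HOL-Library.Product_Lexorder"
begin

text \<open>Words are lists of naturals; positions are 0-indexed internally.\<close>

definition cayley :: "nat list \<Rightarrow> bool" where
  "cayley v \<longleftrightarrow> (\<forall>k\<in>set v. 0 < k \<and> (\<forall>j\<in>{1..k}. j \<in> set v))"

definition weakly_increasing :: "nat list \<Rightarrow> bool" where
  "weakly_increasing u \<longleftrightarrow> cayley u \<and> sorted u"

definition Des :: "nat list \<Rightarrow> nat set" where
  "Des v = {i. Suc i < length v \<and> v ! i \<ge> v ! Suc i}"

definition burge_word :: "nat list \<Rightarrow> nat list \<Rightarrow> bool" where
  "burge_word u v \<longleftrightarrow> length u = length v \<and> weakly_increasing u \<and> cayley v
      \<and> Des u \<subseteq> Des v"

text \<open>Burge transpose: columns (a over b) become (b over a), sorted increasingly by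
  top entry, ties by decreasing bottom entry. Pairs are (top, bottom).\<close>
definition burge_transpose :: "nat list \<Rightarrow> nat list \<Rightarrow> (nat \<times> nat) list" where
  "burge_transpose u v =
     sort_key (\<lambda>(b, a). (b, - int a)) (map (\<lambda>(a, b). (b, a)) (zip u v))"

definition Gamma :: "nat list \<Rightarrow> nat list \<Rightarrow> nat list" where
  "Gamma u v = map snd (burge_transpose u v)"

definition gamma :: "nat list \<Rightarrow> nat list" where
  "gamma x = Gamma [1..<Suc (length x)] x"

definition gamma_equiv :: "nat list \<Rightarrow> nat list \<Rightarrow> bool" where
  "gamma_equiv x y \<longleftrightarrow> gamma x = gamma y"

end

theory Submission
  imports Defs "HOL-Library.Multiset"
begin

lemma swap_zip_nth:
  assumes "length u = length x"
  shows "map (\<lambda>(a, b). (b, a)) (zip u x) = map (\<lambda>i. (x ! i, u ! i)) [0..<length x]"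
  using assms by (intro nth_equalityI) auto

lemma Gamma_via_gamma:
  assumes len: "length u = length x" and su: "sorted u"
  shows "Gamma u x = map (\<lambda>i. u ! (i - 1)) (gamma x)"
proof -
  define h :: "nat \<times> nat \<Rightarrow> nat \<times> int" where "h = (\<lambda>(b, a). (b, - int a))"
  define n where "n = length x"
  define T where "T = burge_transpose [1..<Suc n] x"
  define \<psi> where "\<psi> = (\<lambda>(b::nat, i::nat). (b, u ! (i - 1)))"
  have W1: "map (\<lambda>(a, b). (b, a)) (zip [1..<Suc n] x) = map (\<lambda>i. (x ! i, i + 1)) [0..<n]"
    by (intro nth_equalityI) (auto simp del: upt_Suc simp: n_def nth_upt)
  have W2: "map (\<lambda>(a, b). (b, a)) (zip u x) = map (\<lambda>i. (x ! i, u ! i)) [0..<n]"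
    using swap_zip_nth[OF len] by (simp add: n_def)
  have T_def': "T = sort_key h (map (\<lambda>i. (x ! i, i + 1)) [0..<n])"
    unfolding T_def burge_transpose_def W1 h_def by simp
  have setT: "set T = (\<lambda>i. (x ! i, i + 1)) ` {0..<n}"
    unfolding T_def' by simp
  have inj: "inj h" unfolding h_def inj_def by auto
  have "burge_transpose u x = map \<psi> T"
  proof -
    have "burge_transpose u x = sort_key h (map (\<lambda>i. (x ! i, u ! i)) [0..<n])"
      unfolding burge_transpose_def W2 h_def by simp
    also have "\<dots> = map \<psi> T"
    proof (rule sort_key_inj_key_eq)
      have "map \<psi> (map (\<lambda>i. (x ! i, i + 1)) [0..<n]) = map (\<lambda>i. (x ! i, u ! i)) [0..<n]"
        by (simp add: \<psi>_def)
      moreover have "mset T = mset (map (\<lambda>i. (x ! i, i + 1)) [0..<n])"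
        unfolding T_def' by simp
      ultimately show "mset (map (\<lambda>i. (x ! i, u ! i)) [0..<n]) = mset (map \<psi> T)"
        by (metis mset_map)
      show "inj_on h (set (map (\<lambda>i. (x ! i, u ! i)) [0..<n]))"
        using inj by (simp add: inj_on_def inj_def)
      have "sorted (map h T)" unfolding T_def' by simp
      hence "sorted_wrt (\<lambda>p q. h p \<le> h q) T" by (simp add: sorted_map)
      hence "sorted_wrt (\<lambda>p q. h (\<psi> p) \<le> h (\<psi> q)) T"
      proof (rule sorted_wrt_mono_rel[rotated])
        fix p q assume p: "p \<in> set T" and q: "q \<in> set T" and le: "h p \<le> h q"
        from p setT obtain i where i: "i < n" "p = (x ! i, i + 1)" by auto
        from q setT obtain j where j: "j < n" "q = (x ! j, j + 1)" by auto
        show "h (\<psi> p) \<le> h (\<psi> q)"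
        proof (cases "x ! i < x ! j")
          case True thus ?thesis using i j by (simp add: h_def \<psi>_def)
        next
          case False
          with le i j have eq: "x ! i = x ! j" and ji: "j \<le> i"
            by (auto simp: h_def)
          have "u ! j \<le> u ! i" using su ji i len n_def by (simp add: sorted_nth_mono)
          thus ?thesis using i j eq by (simp add: h_def \<psi>_def)
        qed
      qed
      thus "sorted (map h (map \<psi> T))"
        by (simp add: sorted_map)
    qed
    finally show ?thesis .
  qed
  hence "Gamma u x = map (\<lambda>p. u ! (snd p - 1)) T"
    unfolding Gamma_def by (simp add: \<psi>_def case_prod_beta)
  moreover have "gamma x = map snd T"
    unfolding gamma_def Gamma_def T_def n_def by simp
  ultimately show ?thesis by simp
qed

theorem lemma4p13:
  fixes u x y :: "nat list"
  assumes "burge_word u x" and "burge_word u y" and "gamma_equiv x y"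
  shows "Gamma u x = Gamma u y"
proof -
  have "length u = length x" "length u = length y" "sorted u"
    using assms(1,2) by (auto simp: burge_word_def weakly_increasing_def)
  thus ?thesis
    using Gamma_via_gamma assms(3) unfolding gamma_equiv_def by metis
qed

end
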